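(* For $k\geq1$ (resp. $k\geq2$), the $3$-valent $(2k,0)$-cluster $\triangle(2k)$ has eigenvalue $4$ (resp. $2$) as a $D_3$-invariant eigenvalue, with multiplicity (as $D_3$-invariant eigenvalue) at least $\lceil k/2\rceil$ (resp. $\lfloor k/2\rfloor$); that is, the space of $D_3$-invariant functions $u$ on $V(\triangle(2k))$ with $\Delta_{\triangle(2k)}u=4u$ (resp. $=2u$) has dimension at least $\lceil k/2\rceil$ (resp. $\lfloor k/2\rfloor$).
   Context: With $\omega=e^{\pi i/3}$, the $3$-valent $(m,0)$-cluster $\triangle(m)$ is the graph whose vertices are the barycenters of the $m^2$ unit triangles of the triangular lattice $\mathbb{Z}[\omega]$ contained in the triangle with vertices $0,m,m\omega$, two being adjacent when the triangles share an edge. Its Laplacian eigen-equation is considered with the Neumann-type convention $(\Delta_{\triangle(m)}u)(x)=3u(x)-\sum_{y\sim x}u(y)-(3-\deg(x))u(x)$, i.e. $(\Delta_{\triangle(m)}u)(x)=\deg_{\triangle(m)}(x)u(x)-\sum_{y\sim x}u(y)$. The dihedral group $D_3$ of symmetries of the triangle acts on $V(\triangle(m))$; a function $u$ is $D_3$-invariant if $u(\sigma x)=u(x)$ for all $\sigma\in D_3$ and all $x$. *)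

theory Defs
  imports Complex_Main "HOL-Library.Function_Algebras"
begin

text \<open>Lattice points of Z[omega] are encoded as pairs (x,y) of integers, standing for x + y*omega.
  The big triangle with vertices 0, m, m*omega is {(x,y). x >= 0, y >= 0, x + y <= m}.\<close>

definition up_tri :: "int \<Rightarrow> int \<Rightarrow> (int \<times> int) set" where
  "up_tri a b = {(a, b), (a + 1, b), (a, b + 1)}"

definition down_tri :: "int \<Rightarrow> int \<Rightarrow> (int \<times> int) set" where
  "down_tri a b = {(a + 1, b), (a, b + 1), (a + 1, b + 1)}"

text \<open>Vertices of the cluster: the unit triangles (as sets of their three corners)
  contained in the triangle with vertices 0, m, m*omega.\<close>

definition in_big_tri :: "nat \<Rightarrow> int \<times> int \<Rightarrow> bool" where
  "in_big_tri m p \<longleftrightarrow> fst p \<ge> 0 \<and> snd p \<ge> 0 \<and> fst p + snd p \<le> int m"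

definition cluster_V :: "nat \<Rightarrow> (int \<times> int) set set" where
  "cluster_V m = {T. (\<exists>a b. T = up_tri a b \<or> T = down_tri a b) \<and> (\<forall>p\<in>T. in_big_tri m p)}"

text \<open>Two unit triangles are adjacent iff they share an edge, i.e. exactly two corners.\<close>

definition cluster_adj :: "nat \<Rightarrow> (int \<times> int) set \<Rightarrow> (int \<times> int) set \<Rightarrow> bool" where
  "cluster_adj m S T \<longleftrightarrow> S \<in> cluster_V m \<and> T \<in> cluster_V m \<and> card (S \<inter> T) = 2"

definition cluster_deg :: "nat \<Rightarrow> (int \<times> int) set \<Rightarrow> nat" where
  "cluster_deg m S = card {T. cluster_adj m S T}"

text \<open>Laplacian with the Neumann-type convention: (Delta u)(x) = deg(x) u(x) - sum_{y~x} u(y).\<close>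

definition cluster_laplacian ::
  "nat \<Rightarrow> ((int \<times> int) set \<Rightarrow> real) \<Rightarrow> (int \<times> int) set \<Rightarrow> real" where
  "cluster_laplacian m u S = real (cluster_deg m S) * u S - (\<Sum>T\<in>{T. cluster_adj m S T}. u T)"

text \<open>The dihedral group D_3 of symmetries of the triangle 0, m, m*omega acts on lattice
  points by permuting the barycentric coordinates (x, y, m - x - y).\<close>

definition d3_maps :: "nat \<Rightarrow> (int \<times> int \<Rightarrow> int \<times> int) set" where
  "d3_maps m = {\<lambda>(x, y). (x, y),
                \<lambda>(x, y). (y, x),
                \<lambda>(x, y). (y, int m - x - y),
                \<lambda>(x, y). (int m - x - y, x),
                \<lambda>(x, y). (x, int m - x - y),
                \<lambda>(x, y). (int m - x - y, y)}"

definition D3_invariant :: "nat \<Rightarrow> ((int \<times> int) set \<Rightarrow> real) \<Rightarrow> bool" where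
  "D3_invariant m u \<longleftrightarrow> (\<forall>\<sigma>\<in>d3_maps m. \<forall>S\<in>cluster_V m. u (\<sigma> ` S) = u S)"

text \<open>The space of D_3-invariant eigenfunctions for eigenvalue lam, as real-valued functions
  on V(triangle(m)) (extended by 0 outside the vertex set).\<close>

definition D3_eigenspace :: "nat \<Rightarrow> real \<Rightarrow> ((int \<times> int) set \<Rightarrow> real) set" where
  "D3_eigenspace m lam = {u. (\<forall>S. S \<notin> cluster_V m \<longrightarrow> u S = 0) \<and> D3_invariant m u \<and>
      (\<forall>S\<in>cluster_V m. cluster_laplacian m u S = lam * u S)}"

definition fun_dim :: "('a \<Rightarrow> real) set \<Rightarrow> nat" where
  "fun_dim E = vector_space.dim (\<lambda>c f x. c * f x) E"

end

theory Submission
  imports Defs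
begin



definition lo :: "(int \<times> int) set \<Rightarrow> int \<times> int" where
  "lo S = (Min (fst ` S), Min (snd ` S))"

lemma lo_up[simp]: "lo (up_tri a b) = (a, b)"
  by (simp add: lo_def up_tri_def)
lemma lo_down[simp]: "lo (down_tri a b) = (a, b)"
  by (simp add: lo_def down_tri_def)
lemma lo_in_up[simp]: "(a, b) \<in> up_tri a b" by (simp add: up_tri_def)
lemma lo_notin_down[simp]: "(a, b) \<notin> down_tri a b" by (simp add: down_tri_def)

lemma up_inj[simp]: "up_tri a b = up_tri c d \<longleftrightarrow> a = c \<and> b = d"
  by (metis lo_up prod.inject)
lemma down_inj[simp]: "down_tri a b = down_tri c d \<longleftrightarrow> a = c \<and> b = d"
  by (metis lo_down prod.inject)
lemma up_ne_down[simp]: "up_tri a b \<noteq> down_tri c d"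
  by (metis lo_down lo_in_up lo_notin_down lo_up)
lemma down_ne_up[simp]: "down_tri c d \<noteq> up_tri a b"
  using up_ne_down by metis

lemma up_in_V: "up_tri a b \<in> cluster_V m \<longleftrightarrow> 0 \<le> a \<and> 0 \<le> b \<and> a + b + 1 \<le> int m"
  by (auto simp: cluster_V_def up_tri_def in_big_tri_def)
lemma down_in_V: "down_tri a b \<in> cluster_V m \<longleftrightarrow> 0 \<le> a \<and> 0 \<le> b \<and> a + b + 2 \<le> int m"
  by (auto simp: cluster_V_def down_tri_def in_big_tri_def)

lemma V_cases:
  assumes "S \<in> cluster_V m"
  obtains a b where "S = up_tri a b" "0 \<le> a" "0 \<le> b" "a + b + 1 \<le> int m"
    | a b where "S = down_tri a b" "0 \<le> a" "0 \<le> b" "a + b + 2 \<le> int m"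
proof -
  from assms obtain a b where "S = up_tri a b \<or> S = down_tri a b" unfolding cluster_V_def by blast
  then show ?thesis
  proof
    assume "S = up_tri a b" then show ?thesis using that(1) assms up_in_V by blast
  next
    assume "S = down_tri a b" then show ?thesis using that(2) assms down_in_V by blast
  qed
qed

lemma card_up_int: "card (up_tri a b \<inter> X) =
   (if (a, b) \<in> X then 1 else 0) + (if (a + 1, b) \<in> X then 1 else 0) + (if (a, b + 1) \<in> X then 1 else (0::nat))"
  by (simp add: up_tri_def Int_insert_left card_insert_if)
lemma card_down_int: "card (down_tri a b \<inter> X) =
   (if (a + 1, b) \<in> X then 1 else 0) + (if (a, b + 1) \<in> X then 1 else 0) + (if (a + 1, b + 1) \<in> X then 1 else (0::nat))"
  by (simp add: down_tri_def Int_insert_left card_insert_if)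

lemma uu: "card (up_tri a b \<inter> up_tri c d) \<noteq> 2"
  unfolding card_up_int by (auto simp: up_tri_def)
lemma dd: "card (down_tri a b \<inter> down_tri c d) \<noteq> 2"
  unfolding card_down_int by (auto simp: down_tri_def)
lemma ud: "card (up_tri a b \<inter> down_tri c d) = 2 \<longleftrightarrow>
   (c = a \<and> d = b) \<or> (c = a - 1 \<and> d = b) \<or> (c = a \<and> d = b - 1)"
  unfolding card_up_int by (auto simp: down_tri_def)
lemma du: "card (down_tri a b \<inter> up_tri c d) = 2 \<longleftrightarrow>
   (c = a \<and> d = b) \<or> (c = a + 1 \<and> d = b) \<or> (c = a \<and> d = b + 1)"
  unfolding card_down_int by (auto simp: up_tri_def)


definition sg :: "int \<Rightarrow> real" where "sg x = (if even x then 1 else -1)"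

lemma sg_plus1[simp]: "sg (x + 1) = - sg x" by (simp add: sg_def)
lemma sg_minus1[simp]: "sg (x - 1) = - sg x" by (simp add: sg_def)
lemma sg_1plus[simp]: "sg (1 + x) = - sg x" by (simp add: sg_def)
lemma s2': "s * s = 1 \<Longrightarrow> s * (s * x) = (x::real)" by (simp add: mult.assoc[symmetric])

definition PU :: "real \<Rightarrow> (int \<Rightarrow> real) \<Rightarrow> int \<Rightarrow> int \<Rightarrow> real" where
  "PU s g a b = sg a * g b + sg b * g a - s * sg a * g (a + b + 1)"
definition PD :: "real \<Rightarrow> (int \<Rightarrow> real) \<Rightarrow> int \<Rightarrow> int \<Rightarrow> real" where
  "PD s g a b = s * (sg a * g (b + 1) + sg b * g (a + 1)) - sg a * g (a + b + 1)"

locale gprop =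
  fixes m :: nat and s :: real and g :: "int \<Rightarrow> real"
  assumes s2: "s * s = 1" and meven: "even m"
    and geven: "\<And>x. even x \<Longrightarrow> g x = 0"
    and gsym: "\<And>x. g (int m - x) = - s * g x"
begin

lemma I1: "PD s g a b + PD s g (a - 1) b + PD s g a (b - 1) = s * PU s g a b"
  by (simp add: PD_def PU_def algebra_simps s2)

lemma I2: "PU s g a b + PU s g (a + 1) b + PU s g a (b + 1) = s * PD s g a b"
proof -
  have e: "a + 1 + b + 1 = a + b + 1 + 1" "a + (b + 1) + 1 = a + b + 1 + 1" by simp_all
  show ?thesis by (simp add: PD_def PU_def e algebra_simps s2 s2'[OF s2])
qed

lemma g0: "g 0 = 0" by (rule geven) simp
lemma gm: "g (int m) = 0" by (rule geven) (use meven in simp)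

lemma G1: "PD s g (-1) b = PU s g 0 b"
  by (simp add: PD_def PU_def g0 sg_def)

lemma G2: "PD s g a (-1) = PU s g a 0"
proof (cases "even a")
  case True
  then show ?thesis by (simp add: PD_def PU_def g0 sg_def geven)
next
  case False
  then have "g (a + 1) = 0" by (intro geven) simp
  then show ?thesis using False by (simp add: PD_def PU_def g0 sg_def)
qed

lemma G3: assumes "a + b + 1 = int m" shows "PD s g a b = PU s g a b"
proof -
  have h1: "b + 1 = int m - a" and h2: "a + 1 = int m - b" using assms by simp_all
  have e1: "g (b + 1) = - s * g a" unfolding h1 by (rule gsym)
  have e2: "g (a + 1) = - s * g b" unfolding h2 by (rule gsym)
  have e3: "g (a + b + 1) = 0" using assms gm by simp
  have em: "even (int m)" using meven by simp
  have "odd (a + b)" using assms em by (metis even_add odd_one)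
  then have e4: "sg b = - sg a" by (auto simp: sg_def)
  show ?thesis unfolding PD_def PU_def e1 e2 e3 e4 by (simp add: algebra_simps s2'[OF s2])
qed

lemma T1U: "PU s g b a = PU s g a b"
proof (cases "even (a + b)")
  case True
  then have "sg a = sg b" by (auto simp: sg_def)
  then show ?thesis by (simp add: PU_def algebra_simps)
next
  case False
  then have "g (a + b + 1) = 0" by (intro geven) simp
  moreover have "g (b + a + 1) = 0" using False by (intro geven) simp
  ultimately show ?thesis by (simp add: PU_def algebra_simps)
qed

lemma T1D: "PD s g b a = PD s g a b"
proof (cases "even (a + b)")
  case True
  then have "sg a = sg b" by (auto simp: sg_def)
  then show ?thesis by (simp add: PD_def algebra_simps)
next
  case False
  then have "g (a + b + 1) = 0" by (intro geven) simp
  moreover have "g (b + a + 1) = 0" using False by (intro geven) simp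
  ultimately show ?thesis by (simp add: PD_def algebra_simps)
qed

lemma T2U: "PU s g a (int m - 1 - a - b) = PU s g a b"
proof -
  let ?c = "int m - 1 - a - b"
  have e1: "g ?c = - s * g (a + b + 1)" using gsym[of "a + b + 1"] by (simp add: algebra_simps)
  have e2: "g (a + ?c + 1) = - s * g b" using gsym[of b] by (simp add: algebra_simps)
  have e3: "sg ?c * g a = sg b * g a"
  proof (cases "even a")
    case True then show ?thesis by (simp add: geven)
  next
    case False then show ?thesis using meven by (auto simp: sg_def)
  qed
  show ?thesis unfolding PU_def e1 e2 e3 by (simp add: algebra_simps s2'[OF s2])
qed

lemma T2D: "PD s g a (int m - 2 - a - b) = PD s g a b"
proof -
  let ?c = "int m - 2 - a - b"
  have e1: "g (?c + 1) = - s * g (a + b + 1)" using gsym[of "a + b + 1"] by (simp add: algebra_simps)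
  have e2: "g (a + ?c + 1) = - s * g (b + 1)" using gsym[of "b + 1"] by (simp add: algebra_simps)
  have e3: "sg ?c * g (a + 1) = sg b * g (a + 1)"
  proof (cases "even a")
    case False then show ?thesis by (simp add: geven)
  next
    case True then show ?thesis using meven by (auto simp: sg_def)
  qed
  show ?thesis unfolding PD_def e1 e2 e3 by (simp add: algebra_simps s2'[OF s2])
qed


end

lemma nbr_up:
  assumes "up_tri a b \<in> cluster_V m"
  shows "{T. cluster_adj m (up_tri a b) T} = {down_tri a b, down_tri (a - 1) b, down_tri a (b - 1)} \<inter> cluster_V m"
proof (intro set_eqI iffI)
  fix T assume "T \<in> {T. cluster_adj m (up_tri a b) T}"
  then have T: "T \<in> cluster_V m" "card (up_tri a b \<inter> T) = 2" by (auto simp: cluster_adj_def)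
  from T(1) show "T \<in> {down_tri a b, down_tri (a - 1) b, down_tri a (b - 1)} \<inter> cluster_V m"
    by (cases rule: V_cases) (use T uu ud in auto)
next
  fix T assume "T \<in> {down_tri a b, down_tri (a - 1) b, down_tri a (b - 1)} \<inter> cluster_V m"
  then show "T \<in> {T. cluster_adj m (up_tri a b) T}" using assms
    by (auto simp: cluster_adj_def ud)
qed

lemma nbr_down:
  assumes "down_tri a b \<in> cluster_V m"
  shows "{T. cluster_adj m (down_tri a b) T} = {up_tri a b, up_tri (a + 1) b, up_tri a (b + 1)}"
proof (intro set_eqI iffI)
  fix T assume "T \<in> {T. cluster_adj m (down_tri a b) T}"
  then have T: "T \<in> cluster_V m" "card (down_tri a b \<inter> T) = 2" by (auto simp: cluster_adj_def)
  from T(1) show "T \<in> {up_tri a b, up_tri (a + 1) b, up_tri a (b + 1)}"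
    by (cases rule: V_cases) (use T dd du in auto)
next
  fix T assume "T \<in> {up_tri a b, up_tri (a + 1) b, up_tri a (b + 1)}"
  then show "T \<in> {T. cluster_adj m (down_tri a b) T}" using assms
    by (auto simp: cluster_adj_def du up_in_V down_in_V)
qed

lemma lap_alt:
  assumes "finite {T. cluster_adj m S T}"
  shows "cluster_laplacian m u S = (\<Sum>T\<in>{T. cluster_adj m S T}. u S - u T)"
  using assms by (simp add: cluster_laplacian_def cluster_deg_def sum_subtractf)

definition ufun :: "nat \<Rightarrow> real \<Rightarrow> (int \<Rightarrow> real) \<Rightarrow> (int \<times> int) set \<Rightarrow> real" where
  "ufun m s g S = (if S \<in> cluster_V m then
     (if lo S \<in> S then PU s g (fst (lo S)) (snd (lo S)) else PD s g (fst (lo S)) (snd (lo S))) else 0)"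

lemma ufun_up: "up_tri a b \<in> cluster_V m \<Longrightarrow> ufun m s g (up_tri a b) = PU s g a b"
  by (simp add: ufun_def)
lemma ufun_down: "down_tri a b \<in> cluster_V m \<Longrightarrow> ufun m s g (down_tri a b) = PD s g a b"
  by (simp add: ufun_def)

context gprop begin

lemma eig_up:
  assumes V: "up_tri a b \<in> cluster_V m"
  shows "cluster_laplacian m (ufun m s g) (up_tri a b) = (3 - s) * ufun m s g (up_tri a b)"
proof -
  let ?u = "ufun m s g"
  let ?A = "{down_tri a b, down_tri (a - 1) b, down_tri a (b - 1)}"
  have fin: "finite {T. cluster_adj m (up_tri a b) T}" unfolding nbr_up[OF V] by simp
  have "cluster_laplacian m ?u (up_tri a b) = (\<Sum>T\<in>?A \<inter> cluster_V m. ?u (up_tri a b) - ?u T)"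
    using lap_alt[OF fin] nbr_up[OF V] by simp
  also have "\<dots> = (\<Sum>T\<in>?A. if T \<in> cluster_V m then ?u (up_tri a b) - ?u T else 0)"
    by (simp add: sum.inter_restrict)
  also have "\<dots> = (if down_tri a b \<in> cluster_V m then PU s g a b - PD s g a b else 0)
      + (if down_tri (a - 1) b \<in> cluster_V m then PU s g a b - PD s g (a - 1) b else 0)
      + (if down_tri a (b - 1) \<in> cluster_V m then PU s g a b - PD s g a (b - 1) else 0)"
    using V by (simp add: ufun_up ufun_down)
  also have "\<dots> = (PU s g a b - PD s g a b) + (PU s g a b - PD s g (a - 1) b) + (PU s g a b - PD s g a (b - 1))"
  proof -
    have 1: "(if down_tri a b \<in> cluster_V m then PU s g a b - PD s g a b else 0) = PU s g a b - PD s g a b"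
      using V G3[of a b] by (auto simp: up_in_V down_in_V)
    have 2: "(if down_tri (a - 1) b \<in> cluster_V m then PU s g a b - PD s g (a - 1) b else 0) = PU s g a b - PD s g (a - 1) b"
      using V G1[of b] by (auto simp: up_in_V down_in_V)
    have 3: "(if down_tri a (b - 1) \<in> cluster_V m then PU s g a b - PD s g a (b - 1) else 0) = PU s g a b - PD s g a (b - 1)"
      using V G2[of a] by (auto simp: up_in_V down_in_V)
    show ?thesis unfolding 1 2 3 ..
  qed
  also have "\<dots> = (3 - s) * PU s g a b" using I1[of a b] by (simp add: algebra_simps)
  finally show ?thesis using V by (simp add: ufun_up)
qed

lemma eig_down:
  assumes V: "down_tri a b \<in> cluster_V m"
  shows "cluster_laplacian m (ufun m s g) (down_tri a b) = (3 - s) * ufun m s g (down_tri a b)"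
proof -
  let ?u = "ufun m s g"
  have fin: "finite {T. cluster_adj m (down_tri a b) T}" unfolding nbr_down[OF V] by simp
  have inV: "up_tri a b \<in> cluster_V m" "up_tri (a + 1) b \<in> cluster_V m" "up_tri a (b + 1) \<in> cluster_V m"
    using V by (auto simp: up_in_V down_in_V)
  have "cluster_laplacian m ?u (down_tri a b) = (\<Sum>T\<in>{up_tri a b, up_tri (a + 1) b, up_tri a (b + 1)}. ?u (down_tri a b) - ?u T)"
    using lap_alt[OF fin] nbr_down[OF V] by simp
  also have "\<dots> = (PD s g a b - PU s g a b) + (PD s g a b - PU s g (a + 1) b) + (PD s g a b - PU s g a (b + 1))"
    using V inV by (simp add: ufun_up ufun_down)
  also have "\<dots> = (3 - s) * PD s g a b" using I2[of a b] by (simp add: algebra_simps)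
  finally show ?thesis using V by (simp add: ufun_down)
qed

lemma eig:
  assumes "S \<in> cluster_V m"
  shows "cluster_laplacian m (ufun m s g) S = (3 - s) * ufun m s g S"
  using assms by (cases rule: V_cases) (use eig_up eig_down up_in_V down_in_V in auto)

end



lemma im1: "(\<lambda>(x, y). (x, y)) ` (S :: (int \<times> int) set) = S" by simp

lemma im2u: "(\<lambda>(x, y). (y, x)) ` up_tri a b = up_tri b a"
  by (simp add: up_tri_def insert_commute)
lemma im2d: "(\<lambda>(x, y). (y, x)) ` down_tri a b = down_tri b a"
  by (simp add: down_tri_def insert_commute)

lemma im3u: assumes "c = int m - 1 - a - b"
  shows "(\<lambda>(x, y). (y, int m - x - y)) ` up_tri a b = up_tri b c"
proof -
  have e: "int m - a - b = c + 1" "int m - (a + 1) - b = c" "int m - a - (b + 1) = c" using assms by simp_all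
  show ?thesis by (simp add: up_tri_def e insert_commute)
qed
lemma im3d: assumes "c = int m - 2 - a - b"
  shows "(\<lambda>(x, y). (y, int m - x - y)) ` down_tri a b = down_tri b c"
proof -
  have e: "int m - (a + 1) - b = c + 1" "int m - a - (b + 1) = c + 1" "int m - (a + 1) - (b + 1) = c" using assms by simp_all
  show ?thesis by (simp add: down_tri_def e insert_commute)
qed

lemma im4u: assumes "c = int m - 1 - a - b"
  shows "(\<lambda>(x, y). (int m - x - y, x)) ` up_tri a b = up_tri c a"
proof -
  have e: "int m - a - b = c + 1" "int m - (a + 1) - b = c" "int m - a - (b + 1) = c" using assms by simp_all
  show ?thesis by (simp add: up_tri_def e insert_commute)
qed
lemma im4d: assumes "c = int m - 2 - a - b"
  shows "(\<lambda>(x, y). (int m - x - y, x)) ` down_tri a b = down_tri c a"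
proof -
  have e: "int m - (a + 1) - b = c + 1" "int m - a - (b + 1) = c + 1" "int m - (a + 1) - (b + 1) = c" using assms by simp_all
  show ?thesis by (simp add: down_tri_def e insert_commute)
qed

lemma im5u: assumes "c = int m - 1 - a - b"
  shows "(\<lambda>(x, y). (x, int m - x - y)) ` up_tri a b = up_tri a c"
proof -
  have e: "int m - a - b = c + 1" "int m - (a + 1) - b = c" "int m - a - (b + 1) = c" using assms by simp_all
  show ?thesis by (simp add: up_tri_def e insert_commute)
qed
lemma im5d: assumes "c = int m - 2 - a - b"
  shows "(\<lambda>(x, y). (x, int m - x - y)) ` down_tri a b = down_tri a c"
proof -
  have e: "int m - (a + 1) - b = c + 1" "int m - a - (b + 1) = c + 1" "int m - (a + 1) - (b + 1) = c" using assms by simp_all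
  show ?thesis by (simp add: down_tri_def e insert_commute)
qed

lemma im6u: assumes "c = int m - 1 - a - b"
  shows "(\<lambda>(x, y). (int m - x - y, y)) ` up_tri a b = up_tri c b"
proof -
  have e: "int m - a - b = c + 1" "int m - (a + 1) - b = c" "int m - a - (b + 1) = c" using assms by simp_all
  show ?thesis by (simp add: up_tri_def e insert_commute)
qed
lemma im6d: assumes "c = int m - 2 - a - b"
  shows "(\<lambda>(x, y). (int m - x - y, y)) ` down_tri a b = down_tri c b"
proof -
  have e: "int m - (a + 1) - b = c + 1" "int m - a - (b + 1) = c + 1" "int m - (a + 1) - (b + 1) = c" using assms by simp_all
  show ?thesis by (simp add: down_tri_def e insert_commute)
qed

context gprop begin

lemma PU_perm: assumes "c = int m - 1 - a - b"
  shows "PU s g b c = PU s g a b" "PU s g c a = PU s g a b" "PU s g a c = PU s g a b" "PU s g c b = PU s g a b"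
proof -
  have 1: "PU s g a c = PU s g a b" using T2U[of a b] assms by simp
  have "int m - 1 - b - a = c" using assms by simp
  then have 2: "PU s g b c = PU s g a b" using T2U[of b a] T1U[of a b] by simp
  show "PU s g b c = PU s g a b" by (rule 2)
  show "PU s g a c = PU s g a b" by (rule 1)
  show "PU s g c a = PU s g a b" using 1 T1U[of a c] by simp
  show "PU s g c b = PU s g a b" using 2 T1U[of b c] by simp
qed

lemma PD_perm: assumes "c = int m - 2 - a - b"
  shows "PD s g b c = PD s g a b" "PD s g c a = PD s g a b" "PD s g a c = PD s g a b" "PD s g c b = PD s g a b"
proof -
  have 1: "PD s g a c = PD s g a b" using T2D[of a b] assms by simp
  have "int m - 2 - b - a = c" using assms by simp
  then have 2: "PD s g b c = PD s g a b" using T2D[of b a] T1D[of a b] by simp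
  show "PD s g b c = PD s g a b" by (rule 2)
  show "PD s g a c = PD s g a b" by (rule 1)
  show "PD s g c a = PD s g a b" using 1 T1D[of a c] by simp
  show "PD s g c b = PD s g a b" using 2 T1D[of b c] by simp
qed

lemma inv_up:
  assumes sig: "\<sigma> \<in> d3_maps m" and V: "up_tri a b \<in> cluster_V m"
  shows "ufun m s g (\<sigma> ` up_tri a b) = ufun m s g (up_tri a b)"
proof -
  define c where "c = int m - 1 - a - b"
  have r: "0 \<le> a" "0 \<le> b" "0 \<le> c" "a + b + c = int m - 1" using V by (auto simp: up_in_V c_def)
  have v: "up_tri x y \<in> cluster_V m" if "x \<in> {a, b, c}" "y \<in> {a, b, c}" "x + y + 1 \<le> int m" for x y
    using that r by (auto simp: up_in_V)
  note P = PU_perm[OF c_def]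
  from sig show ?thesis unfolding d3_maps_def
    apply (elim insertE emptyE)
         apply (simp add: im1)
        apply (simp only: im2u, subst ufun_up, rule v, use r in auto, subst ufun_up[OF V], rule T1U)
       apply (simp only: im3u[OF c_def], subst ufun_up, rule v, use r in auto, subst ufun_up[OF V], rule P)
      apply (simp only: im4u[OF c_def], subst ufun_up, rule v, use r in auto, subst ufun_up[OF V], rule P)
     apply (simp only: im5u[OF c_def], subst ufun_up, rule v, use r in auto, subst ufun_up[OF V], rule P)
    apply (simp only: im6u[OF c_def], subst ufun_up, rule v, use r in auto, subst ufun_up[OF V], rule P)
    done
qed

lemma inv_down:
  assumes sig: "\<sigma> \<in> d3_maps m" and V: "down_tri a b \<in> cluster_V m"
  shows "ufun m s g (\<sigma> ` down_tri a b) = ufun m s g (down_tri a b)"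
proof -
  define c where "c = int m - 2 - a - b"
  have r: "0 \<le> a" "0 \<le> b" "0 \<le> c" "a + b + c = int m - 2" using V by (auto simp: down_in_V c_def)
  have v: "down_tri x y \<in> cluster_V m" if "x \<in> {a, b, c}" "y \<in> {a, b, c}" "x + y + 2 \<le> int m" for x y
    using that r by (auto simp: down_in_V)
  note P = PD_perm[OF c_def]
  from sig show ?thesis unfolding d3_maps_def
    apply (elim insertE emptyE)
         apply (simp add: im1)
        apply (simp only: im2d, subst ufun_down, rule v, use r in auto, subst ufun_down[OF V], rule T1D)
       apply (simp only: im3d[OF c_def], subst ufun_down, rule v, use r in auto, subst ufun_down[OF V], rule P)
      apply (simp only: im4d[OF c_def], subst ufun_down, rule v, use r in auto, subst ufun_down[OF V], rule P)
     apply (simp only: im5d[OF c_def], subst ufun_down, rule v, use r in auto, subst ufun_down[OF V], rule P)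
    apply (simp only: im6d[OF c_def], subst ufun_down, rule v, use r in auto, subst ufun_down[OF V], rule P)
    done
qed

lemma invariant: "D3_invariant m (ufun m s g)"
  unfolding D3_invariant_def
proof (intro ballI)
  fix \<sigma> S assume sig: "\<sigma> \<in> d3_maps m" and S: "S \<in> cluster_V m"
  from S show "ufun m s g (\<sigma> ` S) = ufun m s g S"
    by (cases rule: V_cases) (use inv_up[OF sig] inv_down[OF sig] up_in_V down_in_V in auto)
qed

lemma in_eigenspace:
  assumes "lam = 3 - s"
  shows "ufun m s g \<in> D3_eigenspace m lam"
  unfolding D3_eigenspace_def using invariant eig assms by (auto simp: ufun_def)

end



lemma fun_sum_apply: "finite A \<Longrightarrow> (\<Sum>a\<in>A. F a) x = (\<Sum>a\<in>A. F a x)"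
  by (induction A rule: finite_induct) auto

lemma fun_sum_apply': "(\<Sum>a\<in>A. F a) x = (\<Sum>a\<in>A. F a x)"
  by (cases "finite A") (auto simp: fun_sum_apply)

interpretation FS: vector_space "\<lambda>(c::real) (f::'a \<Rightarrow> real) x. c * f x"
  by unfold_locales (auto simp: algebra_simps fun_eq_iff)

lemma dim_ge:
  fixes W E B :: "('a \<Rightarrow> real) set"
  assumes "finite W" "E \<subseteq> FS.span W" "B \<subseteq> E" "FS.independent B"
  shows "card B \<le> fun_dim E"
proof -
  obtain A where A: "A \<subseteq> E" "FS.independent A" "E \<subseteq> FS.span A" "card A = FS.dim E"
    by (rule FS.basis_exists)
  have "finite A" using FS.independent_span_bound[OF assms(1) A(2)] A(1) assms(2) by blast
  then have "card B \<le> card A" using FS.independent_span_bound[OF _ assms(4)] A(3) assms(3) by blast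
  then show ?thesis using A(4) by (simp add: fun_dim_def)
qed

lemma indep_family:
  fixes f :: "'i \<Rightarrow> 'a \<Rightarrow> real" and p :: "'i \<Rightarrow> 'a"
  assumes nz: "\<And>i. i \<in> I \<Longrightarrow> f i (p i) \<noteq> 0"
    and z: "\<And>i j. i \<in> I \<Longrightarrow> j \<in> I \<Longrightarrow> i \<noteq> j \<Longrightarrow> f j (p i) = 0"
  shows "FS.independent (f ` I)" "inj_on f I"
proof -
  show inj: "inj_on f I"
  proof (rule inj_onI, rule ccontr)
    fix i j assume "i \<in> I" "j \<in> I" "f i = f j" "i \<noteq> j"
    then show False using nz[of i] z[of i j] by simp
  qed
  show "FS.independent (f ` I)"
    unfolding FS.dependent_explicit
  proof
    assume "\<exists>t u. finite t \<and> t \<subseteq> f ` I \<and> (\<Sum>v\<in>t. (\<lambda>x. u v * v x)) = 0 \<and> (\<exists>v\<in>t. u v \<noteq> 0)"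
    then obtain t c v where t: "finite t" "t \<subseteq> f ` I" and sum0: "(\<Sum>v\<in>t. (\<lambda>x. c v * v x)) = 0"
      and v: "v \<in> t" "c v \<noteq> 0" by blast
    obtain i where i: "i \<in> I" "v = f i" using v t by blast
    have "(\<Sum>w\<in>t. (\<lambda>x. c w * w x)) (p i) = 0" using sum0 by simp
    then have "(\<Sum>w\<in>t. c w * w (p i)) = 0" by (simp add: fun_sum_apply')
    moreover have "(\<Sum>w\<in>t - {v}. c w * w (p i)) = 0"
    proof (rule sum.neutral, rule ballI)
      fix w assume "w \<in> t - {v}"
      then obtain j where "j \<in> I" "w = f j" "j \<noteq> i" using t i by blast
      then show "c w * w (p i) = 0" using z[of i j] i by simp
    qed
    moreover have "(\<Sum>w\<in>t. c w * w (p i)) = c v * v (p i) + (\<Sum>w\<in>t - {v}. c w * w (p i))"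
      by (rule sum.remove[OF t(1) v(1)])
    ultimately show False using v(2) nz[OF i(1)] i(2) by simp
  qed
qed




lemma finite_V: "finite (cluster_V m)"
proof -
  let ?R = "{0..int m} \<times> {0..int m}"
  have "cluster_V m \<subseteq> (\<lambda>(a, b). up_tri a b) ` ?R \<union> (\<lambda>(a, b). down_tri a b) ` ?R"
  proof
    fix S assume "S \<in> cluster_V m"
    then show "S \<in> (\<lambda>(a, b). up_tri a b) ` ?R \<union> (\<lambda>(a, b). down_tri a b) ` ?R"
    proof (cases rule: V_cases)
      case (1 a b) then show ?thesis by (auto intro!: image_eqI[of _ _ "(a, b)"])
    next
      case (2 a b) then show ?thesis by (auto intro!: image_eqI[of _ _ "(a, b)"])
    qed
  qed
  then show ?thesis by (rule finite_subset) auto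
qed

lemma span_eig:
  "D3_eigenspace m lam \<subseteq> FS.span ((\<lambda>T S. if S = T then 1 else 0) ` cluster_V m)"
proof
  fix u assume u: "u \<in> D3_eigenspace m lam"
  let ?W = "(\<lambda>T S. if S = T then 1 else (0::real)) ` cluster_V m"
  have z: "\<And>S. S \<notin> cluster_V m \<Longrightarrow> u S = 0" using u by (simp add: D3_eigenspace_def)
  have "u = (\<Sum>T\<in>cluster_V m. (\<lambda>x. u T * (if x = T then 1 else 0)))"
  proof
    fix x
    show "u x = (\<Sum>T\<in>cluster_V m. (\<lambda>x. u T * (if x = T then 1 else 0))) x"
      unfolding fun_sum_apply' using z[of x] finite_V[of m] by (simp add: if_distrib cong: if_cong)
  qed
  moreover have "(\<Sum>T\<in>cluster_V m. (\<lambda>x. u T * (if x = T then 1 else 0))) \<in> FS.span ?W"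
  proof (rule FS.span_sum)
    fix T assume "T \<in> cluster_V m"
    then have "(\<lambda>S. if S = T then 1 else (0::real)) \<in> FS.span ?W" by (intro FS.span_base) auto
    from FS.span_scale[OF this, of "u T"] show "(\<lambda>x. u T * (if x = T then 1 else 0)) \<in> FS.span ?W" by simp
  qed
  ultimately show "u \<in> FS.span ?W" by simp
qed




lemma ceil_half: "nat \<lceil>real k / 2\<rceil> = (k + 1) div 2"
proof (cases "even k")
  case True
  then obtain t where "k = 2 * t" by blast
  then show ?thesis by simp
next
  case False
  then obtain t where k: "k = 2 * t + 1" using oddE by blast
  have "\<lceil>real k / 2\<rceil> = int t + 1"
    unfolding k by (rule ceiling_unique) auto
  then show ?thesis using k by simp
qed

lemma floor_half: "nat \<lfloor>real k / 2\<rfloor> = k div 2"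
proof -
  have "real k / 2 = real k / real 2" by simp
  then have "\<lfloor>real k / 2\<rfloor> = int (k div 2)" by (simp only: floor_divide_of_nat_eq)
  then show ?thesis by simp
qed


definition gg :: "nat \<Rightarrow> real \<Rightarrow> int \<Rightarrow> int \<Rightarrow> real" where
  "gg m s j x = (if x = j then 1 else 0) - s * (if x = int m - j then 1 else 0)"

lemma gprop_gg:
  assumes "s * s = 1" "even m" "odd j"
  shows "gprop m s (gg m s j)"
proof
  show "s * s = 1" "even m" by (fact assms(1), fact assms(2))
  fix x :: int
  show "even x \<Longrightarrow> gg m s j x = 0"
  proof -
    assume ex: "even x"
    have "x \<noteq> j" using ex assms(3) by auto
    moreover have "x \<noteq> int m - j" using ex assms(2,3) by auto
    ultimately show ?thesis by (simp add: gg_def)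
  qed
  show "gg m s j (int m - x) = - s * gg m s j x"
    using assms(1) by (auto simp: gg_def algebra_simps)
qed

lemma eval_gg:
  assumes "s * s = 1" "even m" "odd j'" "odd j" "0 \<le> j" "j + 1 \<le> int m"
  shows "ufun m s (gg m s j') (up_tri 0 j) = gg m s j' j"
proof -
  interpret gprop m s "gg m s j'" by (rule gprop_gg) (use assms in auto)
  have V: "up_tri 0 j \<in> cluster_V m" using assms by (simp add: up_in_V)
  have "gg m s j' (0 + j + 1) = 0" by (rule geven) (use assms in auto)
  then show ?thesis using V g0 by (simp add: ufun_up PU_def sg_def)
qed

theorem lemma5p1:
  fixes k :: nat
  shows "(k \<ge> 1 \<longrightarrow> fun_dim (D3_eigenspace (2 * k) 4) \<ge> nat \<lceil>real k / 2\<rceil>) \<and>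
         (k \<ge> 2 \<longrightarrow> fun_dim (D3_eigenspace (2 * k) 2) \<ge> nat \<lfloor>real k / 2\<rfloor>)"
proof -
  let ?m = "2 * k"
  let ?W = "(\<lambda>T S. if S = T then 1 else (0::real)) ` cluster_V ?m"
  have finW: "finite ?W" using finite_V by simp
  have main: "card I \<le> fun_dim (D3_eigenspace ?m (3 - s))"
    if s: "s * s = 1" and I: "\<And>i. i \<in> I \<Longrightarrow> 2 * int i + 2 \<le> int ?m"
      and nz: "\<And>i. i \<in> I \<Longrightarrow> gg ?m s (2 * int i + 1) (2 * int i + 1) \<noteq> 0"
      and z: "\<And>i j. i \<in> I \<Longrightarrow> j \<in> I \<Longrightarrow> i \<noteq> j \<Longrightarrow> gg ?m s (2 * int j + 1) (2 * int i + 1) = 0"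
    for s :: real and I :: "nat set"
  proof -
    let ?f = "\<lambda>i. ufun ?m s (gg ?m s (2 * int i + 1))"
    let ?p = "\<lambda>i. up_tri 0 (2 * int i + 1)"
    have ev: "?f j (?p i) = gg ?m s (2 * int j + 1) (2 * int i + 1)" if "i \<in> I" for i j
      by (rule eval_gg) (use s I[OF that] in auto)
    have ind: "FS.independent (?f ` I)" "inj_on ?f I"
      by (rule indep_family[where p = ?p]; use ev nz z in auto)+
    have sub: "?f ` I \<subseteq> D3_eigenspace ?m (3 - s)"
    proof
      fix u assume "u \<in> ?f ` I"
      then obtain i where ui: "u = ?f i" by blast
      interpret gprop ?m s "gg ?m s (2 * int i + 1)" by (rule gprop_gg) (use s in auto)
      show "u \<in> D3_eigenspace ?m (3 - s)" using in_eigenspace ui by simp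
    qed
    have "card (?f ` I) \<le> fun_dim (D3_eigenspace ?m (3 - s))"
      by (rule dim_ge[OF finW span_eig sub ind(1)])
    then show ?thesis using card_image[OF ind(2)] by simp
  qed
  have A: "fun_dim (D3_eigenspace ?m 4) \<ge> nat \<lceil>real k / 2\<rceil>"
  proof -
    have "card {..<(k + 1) div 2} \<le> fun_dim (D3_eigenspace ?m (3 - (-1)))"
    proof (rule main)
      fix i assume "i \<in> {..<(k + 1) div 2}"
      then have i: "i < (k + 1) div 2" by simp
      show "2 * int i + 2 \<le> int ?m" using i by linarith
      show "gg ?m (-1) (2 * int i + 1) (2 * int i + 1) \<noteq> 0" by (simp add: gg_def)
    next
      fix i j assume "i \<in> {..<(k + 1) div 2}" "j \<in> {..<(k + 1) div 2}" "i \<noteq> j"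
      then have "2 * int i + 1 \<noteq> 2 * int j + 1" "2 * int i + 1 \<noteq> int ?m - (2 * int j + 1)" by auto
      then show "gg ?m (-1) (2 * int j + 1) (2 * int i + 1) = 0" by (simp add: gg_def)
    qed simp
    then show ?thesis using ceil_half[of k] by simp
  qed
  have B: "fun_dim (D3_eigenspace ?m 2) \<ge> nat \<lfloor>real k / 2\<rfloor>"
  proof -
    have "card {..<k div 2} \<le> fun_dim (D3_eigenspace ?m (3 - 1))"
    proof (rule main)
      fix i assume "i \<in> {..<k div 2}"
      then have i: "i < k div 2" by simp
      show "2 * int i + 2 \<le> int ?m" using i by linarith
      have "2 * int i + 1 \<noteq> int ?m - (2 * int i + 1)" using i by linarith
      then show "gg ?m 1 (2 * int i + 1) (2 * int i + 1) \<noteq> 0" by (simp add: gg_def)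
    next
      fix i j assume "i \<in> {..<k div 2}" "j \<in> {..<k div 2}" "i \<noteq> j"
      then have "2 * int i + 1 \<noteq> 2 * int j + 1" "2 * int i + 1 \<noteq> int ?m - (2 * int j + 1)" by auto
      then show "gg ?m 1 (2 * int j + 1) (2 * int i + 1) = 0" by (simp add: gg_def)
    qed simp
    then show ?thesis using floor_half[of k] by simp
  qed
  show ?thesis using A B by simp
qed


end
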